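(* Let $0<q<1$, $p=q^{1/2}$, $\alpha,\beta>-1$ real, and let $b_n=b_n^{(\alpha,\beta)}$ be the polynomials defined by the recurrence below. Then for every $n\ge0$ and $\mu\in\mathbb C$, $$b_n(\mu)=\sum_{j=0}^n\frac{(p^{-\beta-n-1},-p^{-\alpha-n-1};p)_j}{(p,p^{-2n-\alpha-\beta-2};p)_j}(-1)^jp^{j/2}\mu^{n-j}\;{}_4\phi_3\!\left(p^{-j},p^{2n+\alpha+\beta+3-j},p^{\beta+1},-p^{\alpha+1};\,p^{\alpha+\beta+2},p^{n+\beta+2-j},-p^{\alpha+n+2-j};\,p,p\right).$$
   Context: Notation: $(a;p)_0=1$, $(a;p)_n=\prod_{j=0}^{n-1}(1-ap^j)$, $(a_1,\dots,a_m;p)_n=\prod_k(a_k;p)_n$; ${}_4\phi_3(a_1,\dots,a_4;b_1,b_2,b_3;p,z)=\sum_{k\ge0}\frac{(a_1,a_2,a_3,a_4;p)_k}{(p,b_1,b_2,b_3;p)_k}z^k$. The polynomials $b_n=b_n^{(\alpha,\beta)}$ are defined by $b_{-1}(\mu)=0$, $b_0(\mu)=1$, and for $k\ge0$ $$b_{k+1}(\mu)=\Big[\mu+\frac{(1-p^{\beta-\alpha})(1+p^{\alpha+\beta+3+2k})}{(1-p^{\alpha+\beta+2+2k})(1-p^{\alpha+\beta+4+2k})}p^{\alpha+3/2+k}\Big]b_k(\mu)+\frac{(1-p^{2\alpha+2+2k})(1-p^{2\beta+2+2k})\,p^{2k+\alpha+\beta+2}}{(1-p^{\alpha+\beta+1+2k})(1-p^{\alpha+\beta+2+2k})^2(1-p^{\alpha+\beta+3+2k})}\,b_{k-1}(\mu).$$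 *)

theory Defs
  imports "HOL-Analysis.Analysis"
begin

definition qpoch :: "complex \<Rightarrow> complex \<Rightarrow> nat \<Rightarrow> complex" where
  "qpoch a p n = (\<Prod>j<n. 1 - a * p ^ j)"

definition phi43 :: "complex \<Rightarrow> complex \<Rightarrow> complex \<Rightarrow> complex \<Rightarrow> complex \<Rightarrow> complex \<Rightarrow> complex
                     \<Rightarrow> complex \<Rightarrow> complex \<Rightarrow> complex" where
  "phi43 a1 a2 a3 a4 b1 b2 b3 p z =
     (\<Sum>k. (qpoch a1 p k * qpoch a2 p k * qpoch a3 p k * qpoch a4 p k)
          / (qpoch p p k * qpoch b1 p k * qpoch b2 p k * qpoch b3 p k) * z ^ k)"

definition pw :: "real \<Rightarrow> real \<Rightarrow> complex" where
  "pw p x = complex_of_real (p powr x)"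

definition bc :: "real \<Rightarrow> real \<Rightarrow> real \<Rightarrow> nat \<Rightarrow> complex" where
  "bc p \<alpha> \<beta> k = ((1 - pw p (\<beta> - \<alpha>)) * (1 + pw p (\<alpha> + \<beta> + 3 + 2 * real k)))
      / ((1 - pw p (\<alpha> + \<beta> + 2 + 2 * real k)) * (1 - pw p (\<alpha> + \<beta> + 4 + 2 * real k)))
      * pw p (\<alpha> + 3/2 + real k)"

definition bd :: "real \<Rightarrow> real \<Rightarrow> real \<Rightarrow> nat \<Rightarrow> complex" where
  "bd p \<alpha> \<beta> k = ((1 - pw p (2 * \<alpha> + 2 + 2 * real k)) * (1 - pw p (2 * \<beta> + 2 + 2 * real k))
        * pw p (2 * real k + \<alpha> + \<beta> + 2))
      / ((1 - pw p (\<alpha> + \<beta> + 1 + 2 * real k)) * (1 - pw p (\<alpha> + \<beta> + 2 + 2 * real k)) ^ 2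
         * (1 - pw p (\<alpha> + \<beta> + 3 + 2 * real k)))"

text \<open>b_n^{(alpha,beta)}(mu) with b_{-1} = 0, b_0 = 1.\<close>
fun bpoly :: "real \<Rightarrow> real \<Rightarrow> real \<Rightarrow> nat \<Rightarrow> complex \<Rightarrow> complex" where
  "bpoly p \<alpha> \<beta> 0 \<mu> = 1"
| "bpoly p \<alpha> \<beta> (Suc 0) \<mu> = (\<mu> + bc p \<alpha> \<beta> 0) * 1 + bd p \<alpha> \<beta> 0 * 0"
| "bpoly p \<alpha> \<beta> (Suc (Suc k)) \<mu> =
     (\<mu> + bc p \<alpha> \<beta> (Suc k)) * bpoly p \<alpha> \<beta> (Suc k) \<mu> + bd p \<alpha> \<beta> (Suc k) * bpoly p \<alpha> \<beta> k \<mu>"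

end

theory Submission
  imports Defs
begin

lemma qpoch_Suc: "qpoch x P (Suc k) = qpoch x P k * (1 - x * P ^ k)"
  by (simp add: qpoch_def lessThan_Suc mult.commute)

lemma qpoch_Suc': "qpoch x P (Suc k) = (1 - x) * qpoch (x * P) P k"
  unfolding qpoch_def by (subst prod.lessThan_Suc_shift) (simp add: mult.assoc power_commutes)

lemma qpoch_0[simp]: "qpoch x P 0 = 1" by (simp add: qpoch_def)

lemma Q1a: "qpoch x P (r+1) = (1-x)*qpoch (x*P) P r" using qpoch_Suc' by simp
lemma Q1b: "qpoch x P (r+1) = qpoch x P r * (1-x*P^r)" using qpoch_Suc by simp
lemma Q2a: "qpoch x P (r+2) = (1-x)*(1-x*P)*qpoch (x*P^2) P r"
  using qpoch_Suc'[of x P "Suc r"] qpoch_Suc'[of "x*P" P r] by (simp add: power2_eq_square mult.assoc)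
lemma Q2b: "qpoch x P (r+2) = qpoch x P r * (1-x*P^r) * (1-x*P^(r+1))"
  using qpoch_Suc[of x P "Suc r"] qpoch_Suc[of x P r] by simp

lemma qa: "qpoch x P (r+2) = (1-x) * qpoch (x*P) P r * (1 - x*P*P^r)"
  using Q1a[of x P "r+1"] Q1b[of "x*P" P r] by (simp add: mult.assoc)
lemma qb: "qpoch x P (r+2) = qpoch x P r * (1-x*P^r) * (1-x*P*P^r)"
  using Q2b[of x P r] by (simp add: mult.assoc mult.commute)
lemma qc: "qpoch x P (r+2) = (1-x)*(1-x*P)*qpoch (x*P^2) P r" using Q2a .
lemma qd: "qpoch x P (r+1) = (1-x)*qpoch (x*P) P r" using Q1a .
lemma qe: "qpoch x P (r+1) = qpoch x P r * (1-x*P^r)" using Q1b .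
lemma qpoch_nz: "(\<And>i. i < r \<Longrightarrow> x*P^i \<noteq> 1) \<Longrightarrow> qpoch x P r \<noteq> 0"
  unfolding qpoch_def by (auto simp: prod_zero_iff)

definition G :: "complex \<Rightarrow> complex \<Rightarrow> complex \<Rightarrow> complex \<Rightarrow> nat \<Rightarrow> nat \<Rightarrow> complex" where
 "G a b s P n m = (-1)^m * s^(m*m) * qpoch (b*P^(n+2)/P^m) P m * qpoch (-(a*P^(n+2)/P^m)) P m
     / (qpoch P P m * qpoch (a*b*P^(2*n+3)/P^m) P m)"

definition cc :: "complex \<Rightarrow> complex \<Rightarrow> complex \<Rightarrow> complex \<Rightarrow> nat \<Rightarrow> complex" where
 "cc a b s P n = (1 - b/a)*(1 + a*b*P^(2*n+3))/((1-a*b*P^(2*n+2))*(1-a*b*P^(2*n+4)))*a * s^3*P^n"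
definition dd :: "complex \<Rightarrow> complex \<Rightarrow> complex \<Rightarrow> complex \<Rightarrow> nat \<Rightarrow> complex" where
 "dd a b s P n = (1-a^2*P^(2*n+2))*(1-b^2*P^(2*n+2))*a*b*P^(2*n+2)
     /((1-a*b*P^(2*n+1))*(1-a*b*P^(2*n+2))^2*(1-a*b*P^(2*n+3)))"

context fixes a b s P :: complex
  assumes Ps: "P = s^2" and s0: "s \<noteq> 0" and a0: "a \<noteq> 0" and b0: "b \<noteq> 0"
  and h1: "\<And>e. e \<ge> 1 \<Longrightarrow> P^e \<noteq> 1"
  and h2: "\<And>e. e \<ge> 2 \<Longrightarrow> a*b*P^e \<noteq> 1"
  and h3: "\<And>e. e \<ge> 1 \<Longrightarrow> b*P^e \<noteq> 1"
  and h4: "\<And>e. a*P^e \<noteq> -1"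
begin

lemma P0: "P \<noteq> 0" using Ps s0 by simp

lemma rec2:
  assumes "r \<le> n'"
  shows "G a b s P (Suc n' + 1) (r+2) = G a b s P (Suc n') (r+2) + cc a b s P (Suc n') * G a b s P (Suc n') (r+1)
          + dd a b s P (Suc n') * G a b s P n' r"
proof -
  define n where "n = Suc n'"
  define X where "X = P^n"
  define Y where "Y = P^r"
  define x where "x = a*b*X^2*P/Y"
  have X0: "X \<noteq> 0" and Y0: "Y \<noteq> 0" using P0 by (auto simp: X_def Y_def)
  have xe: "x = a*b*P^(2*n+1-r)"
  proof -
    have e: "r + (2*n+1-r) = 2*n+1" using assms by (simp add: n_def)
    have "P^(2*n+1-r) * Y = P^(r + (2*n+1-r))" by (simp add: Y_def power_add)
    also have "\<dots> = X^2*P" unfolding e X_def by (simp add: power_add power_mult mult.commute)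
    finally have "P^(2*n+1-r) * Y = X^2*P" .
    then show ?thesis unfolding x_def using Y0 by (simp add: field_simps)
  qed
  have xP: "x*P = a*b*P^(2*n+2-r)" using xe assms by (simp add: n_def power_Suc2[symmetric] mult.assoc Suc_diff_le)
  have nx: "1 - x \<noteq> 0" using h2[of "2*n+1-r"] xe assms by (auto simp: n_def)
  have nxP: "1 - x*P \<noteq> 0" using h2[of "2*n+2-r"] xP assms by (auto simp: n_def)
  have nY1: "1 - Y*P \<noteq> 0" using h1[of "r+1"] by (auto simp: Y_def mult.commute)
  have nY2: "1 - Y*P^2 \<noteq> 0" using h1[of "r+2"] by (auto simp: Y_def power2_eq_square mult_ac)
  have X2: "X^2 = P^(2*n)" unfolding X_def by (simp add: power_mult[symmetric] mult.commute)
  have nk: "1 - a*b*X^2*P^k \<noteq> 0" if "k \<ge> 1" for k using h2[of "2*n+k"] that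
    unfolding X2 by (auto simp: power_add mult_ac n_def)
  define CB where "CB = qpoch (b*X*P/Y) P r"
  define CA where "CA = qpoch (-(a*X*P/Y)) P r"
  define K where "K = qpoch (x*P^2) P r"
  define PP where "PP = qpoch P P r"
  have PP0: "PP \<noteq> 0" unfolding PP_def
    by (rule qpoch_nz) (use h1[of "Suc i" for i] in \<open>auto simp: mult.commute\<close>)
  have K0: "K \<noteq> 0" unfolding K_def
  proof (rule qpoch_nz)
    fix i assume "i < r"
    have "x*P^2*P^i = a*b*P^(2*n+1-r+2+i)" unfolding xe by (simp add: power_add mult_ac power2_eq_square)
    then show "x*P^2*P^i \<noteq> 1" using h2[of "2*n+1-r+2+i"] by simp
  qed
  have sY: "s^2 = P" using Ps by simp
  have YP: "P^r = Y" by (simp add: Y_def)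
  have E1: "G a b s P n (r+2) = (-1)^r * s^(r*r) * (Y^2*P^2) * ((1 - b*X/Y)*CB*(1-b*X*P)) * ((1 + a*X/Y)*CA*(1+a*X*P))
       / ((PP*(1-Y*P)*(1-Y*P^2)) * ((1-x)*(1-x*P)*K))"
  proof -
    have s1: "s^((r+2)*(r+2)) = s^(r*r) * (Y^2*P^2)"
    proof -
      have e: "(r+2)*(r+2) = r*r + (2*(2*r) + 2*2)" by (simp add: algebra_simps)
      have "s^((r+2)*(r+2)) = s^(r*r) * ((s^2)^(2*r) * (s^2)^2)" unfolding e by (simp only: power_add power_mult)
      moreover have "P^(2*r) = Y^2" unfolding Y_def by (simp add: power_mult[symmetric] mult.commute)
      ultimately show ?thesis by (simp add: sY)
    qed
    have a1: "b*P^(n+2)/P^(r+2) = b*X/Y" using P0 by (simp add: X_def Y_def power_add)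
    have a2: "a*P^(n+2)/P^(r+2) = a*X/Y" using P0 by (simp add: X_def Y_def power_add)
    have a3: "a*b*P^(2*n+3)/P^(r+2) = x" unfolding x_def X2 using P0 by (simp add: Y_def power_add field_simps numeral_3_eq_3)
    have q1: "qpoch (b*X/Y) P (r+2) = (1 - b*X/Y)*CB*(1-b*X*P)"
      unfolding qa CB_def using Y0 by (simp add: YP)
    have q2: "qpoch (-(a*X/Y)) P (r+2) = (1 + a*X/Y)*CA*(1+a*X*P)"
      unfolding qa CA_def using Y0 by (simp add: YP)
    have q3: "qpoch P P (r+2) = PP*(1-Y*P)*(1-Y*P^2)"
      unfolding qb PP_def by (simp add: YP power2_eq_square mult_ac)
    have q4: "qpoch x P (r+2) = (1-x)*(1-x*P)*K" unfolding qc K_def ..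
    show ?thesis unfolding G_def a1 a2 a3 q1 q2 q3 q4 s1 by simp
  qed
  have E2: "G a b s P (n+1) (r+2) = (-1)^r * s^(r*r) * (Y^2*P^2) * (CB*(1-b*X*P)*(1-b*X*P^2)) * (CA*(1+a*X*P)*(1+a*X*P^2))
       / ((PP*(1-Y*P)*(1-Y*P^2)) * (K*(1-a*b*X^2*P^3)*(1-a*b*X^2*P^4)))"
  proof -
    have s1: "s^((r+2)*(r+2)) = s^(r*r) * (Y^2*P^2)"
    proof -
      have e: "(r+2)*(r+2) = r*r + (2*(2*r) + 2*2)" by (simp add: algebra_simps)
      have "s^((r+2)*(r+2)) = s^(r*r) * ((s^2)^(2*r) * (s^2)^2)" unfolding e by (simp only: power_add power_mult)
      moreover have "P^(2*r) = Y^2" unfolding Y_def by (simp add: power_mult[symmetric] mult.commute)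
      ultimately show ?thesis by (simp add: sY)
    qed
    have a1: "b*P^(n+1+2)/P^(r+2) = b*X*P/Y" using P0 by (simp add: X_def Y_def power_add)
    have a2: "a*P^(n+1+2)/P^(r+2) = a*X*P/Y" using P0 by (simp add: X_def Y_def power_add)
    have a3: "a*b*P^(2*(n+1)+3)/P^(r+2) = x*P^2" unfolding x_def using P0
      by (simp add: X_def Y_def power_add field_simps numeral_3_eq_3 power_mult[symmetric] mult.commute) (simp add: power2_eq_square)
    have q1: "qpoch (b*X*P/Y) P (r+2) = CB*(1-b*X*P)*(1-b*X*P^2)"
      unfolding qb CB_def using Y0 by (simp add: YP power2_eq_square)
    have q2: "qpoch (-(a*X*P/Y)) P (r+2) = CA*(1+a*X*P)*(1+a*X*P^2)"
      unfolding qb CA_def using Y0 by (simp add: YP power2_eq_square)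
    have q3: "qpoch P P (r+2) = PP*(1-Y*P)*(1-Y*P^2)"
      unfolding qb PP_def by (simp add: YP power2_eq_square mult_ac)
    have u1: "x*P^2*P^r = a*b*X^2*P^3" unfolding x_def YP using Y0 by (simp add: field_simps numeral_3_eq_3 power2_eq_square)
    have u2: "x*P^2*P*P^r = a*b*X^2*P^4" unfolding x_def YP using Y0
      by (simp add: field_simps numeral_3_eq_3 power2_eq_square numeral_Bit0)
    have q4: "qpoch (x*P^2) P (r+2) = K*(1-a*b*X^2*P^3)*(1-a*b*X^2*P^4)" unfolding qb K_def u1 u2 ..
    show ?thesis unfolding G_def a1 a2 a3 q1 q2 q3 q4 s1 by simp
  qed
  have E3: "G a b s P n (r+1) = -((-1)^r * s^(r*r) * (Y* s) * (CB*(1-b*X*P)) * (CA*(1+a*X*P))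
       / ((PP*(1-Y*P)) * ((1-x*P)*K)))"
  proof -
    have s1: "s^((r+1)*(r+1)) = s^(r*r) * (Y* s)"
    proof -
      have e: "(r+1)*(r+1) = r*r + (2*r + 1)" by (simp add: algebra_simps)
      have "s^((r+1)*(r+1)) = s^(r*r) * ((s^2)^r * s)" unfolding e by (simp only: power_add power_mult power_one_right)
      then show ?thesis by (simp add: sY YP)
    qed
    have a1: "b*P^(n+2)/P^(r+1) = b*X*P/Y" using P0 by (simp add: X_def Y_def power_add)
    have a2: "a*P^(n+2)/P^(r+1) = a*X*P/Y" using P0 by (simp add: X_def Y_def power_add)
    have a3: "a*b*P^(2*n+3)/P^(r+1) = x*P" unfolding x_def X2 using P0
      by (simp add: Y_def power_add field_simps numeral_3_eq_3)
    have q1: "qpoch (b*X*P/Y) P (r+1) = CB*(1-b*X*P)"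
      unfolding qe CB_def using Y0 by (simp add: YP)
    have q2: "qpoch (-(a*X*P/Y)) P (r+1) = CA*(1+a*X*P)"
      unfolding qe CA_def using Y0 by (simp add: YP)
    have q3: "qpoch P P (r+1) = PP*(1-Y*P)"
      unfolding qe PP_def by (simp add: YP mult_ac)
    have q4: "qpoch (x*P) P (r+1) = (1-x*P)*K" unfolding qd K_def by (simp add: power2_eq_square mult.assoc)
    show ?thesis unfolding G_def a1 a2 a3 q1 q2 q3 q4 s1 by simp
  qed
  have E4: "G a b s P n' r = (-1)^r * s^(r*r) * CB * CA
       / (PP * ((1-x)*(1-x*P)*K/((1-a*b*X^2*P)*(1-a*b*X^2*P^2))))"
  proof -
    have a1: "b*P^(n'+2)/P^r = b*X*P/Y" using P0 by (simp add: X_def Y_def n_def)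
    have a2: "a*P^(n'+2)/P^r = a*X*P/Y" using P0 by (simp add: X_def Y_def n_def)
    have a3: "a*b*P^(2*n'+3)/P^r = x" unfolding x_def X2 using P0
      by (simp add: Y_def n_def field_simps numeral_3_eq_3)
    have "qpoch x P r * ((1-a*b*X^2*P)*(1-a*b*X^2*P^2)) = (1-x)*(1-x*P)*K"
    proof -
      have v1: "x*P^r = a*b*X^2*P" unfolding x_def YP using Y0 by simp
      have v2: "x*P*P^r = a*b*X^2*P^2" unfolding x_def YP using Y0 by (simp add: power2_eq_square)
      show ?thesis using qb[of x P r] qc[of x P r] unfolding K_def v1 v2 by (simp add: mult_ac)
    qed
    then have q4: "qpoch x P r = (1-x)*(1-x*P)*K/((1-a*b*X^2*P)*(1-a*b*X^2*P^2))"
    proof -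
      have D0: "(1-a*b*X^2*P)*(1-a*b*X^2*P^2) \<noteq> 0" using nk[of 1] nk[of 2] by simp
      show ?thesis using D0 \<open>qpoch x P r * _ = _\<close> by (simp add: eq_divide_eq)
    qed
    show ?thesis unfolding G_def a1 a2 a3 q4 CB_def[symmetric] CA_def[symmetric] PP_def[symmetric] by simp
  qed
  have cv: "cc a b s P n = (1 - b/a)*(1 + a*b*X^2*P^3)/((1-a*b*X^2*P^2)*(1-a*b*X^2*P^4))*a * s^3*X"
    unfolding cc_def X2 by (simp add: power_add X_def mult_ac power2_eq_square)
  have dv: "dd a b s P n = (1-a^2*X^2*P^2)*(1-b^2*X^2*P^2)*a*b*X^2*P^2
     /((1-a*b*X^2*P)*(1-a*b*X^2*P^2)^2*(1-a*b*X^2*P^3))"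
    unfolding dd_def X2 by (simp add: power_add power_mult_distrib X_def mult_ac power2_eq_square)
  define d1 where "d1 = 1-Y*P"
  define d2 where "d2 = 1-Y*P^2"
  define E1c where "E1c = Y - a*b*X^2*P"
  define E2c where "E2c = Y - a*b*X^2*P^2"
  define k1 where "k1 = 1-a*b*X^2*P"
  define k2 where "k2 = 1-a*b*X^2*P^2"
  define k3 where "k3 = 1-a*b*X^2*P^3"
  define k4 where "k4 = 1-a*b*X^2*P^4"
  have ex1: "1 - x = E1c/Y" unfolding E1c_def x_def using Y0 by (simp add: field_simps)
  have ex2: "1 - x*P = E2c/Y" unfolding E2c_def x_def using Y0 by (simp add: field_simps power2_eq_square)
  have nd1: "d1 \<noteq> 0" using nY1 d1_def by simp
  have nd2: "d2 \<noteq> 0" using nY2 d2_def by simp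
  have nE1: "E1c \<noteq> 0" using nx ex1 Y0 by auto
  have nE2: "E2c \<noteq> 0" using nxP ex2 Y0 by auto
  have nk1: "k1 \<noteq> 0" using nk[of 1] k1_def by simp
  have nk2: "k2 \<noteq> 0" using nk[of 2] k2_def by simp
  have nk3: "k3 \<noteq> 0" using nk[of 3] k3_def by simp
  have nk4: "k4 \<noteq> 0" using nk[of 4] k4_def by simp
  note E1' = E1[unfolded ex1 ex2, folded d1_def d2_def k1_def k2_def k3_def k4_def]
  note E2' = E2[unfolded ex1 ex2, folded d1_def d2_def k1_def k2_def k3_def k4_def]
  note E3' = E3[unfolded ex1 ex2, folded d1_def d2_def k1_def k2_def k3_def k4_def]
  note E4' = E4[unfolded ex1 ex2, folded d1_def d2_def k1_def k2_def k3_def k4_def]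
  note cv' = cv[folded d1_def d2_def k1_def k2_def k3_def k4_def]
  note dv' = dv[folded d1_def d2_def k1_def k2_def k3_def k4_def]
  define Z where "Z = (-1)^r * s^(r*r) * CB * CA"
  define N where "N = Z * P^2 * Y^2 * (1-b*X*P)*(1+a*X*P) / (PP*K*d1*d2*k2*k3*k4*E1c*E2c)"
  have F0: "G a b s P n (r+2) = N * ((Y-b*X)*(Y+a*X)*k2*k3*k4)"
    unfolding E1' N_def Z_def using PP0 K0 nd1 nd2 nE1 nE2 nk2 nk3 nk4 Y0
    by (simp add: field_simps)
  have F1: "G a b s P (n+1) (r+2) = N * ((1-b*X*P^2)*(1+a*X*P^2)*k2*E1c*E2c)"
    unfolding E2' N_def Z_def using PP0 K0 nd1 nd2 nE1 nE2 nk2 nk3 nk4 Y0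
    by (simp add: field_simps) algebra
  have F4: "dd a b s P n * G a b s P n' r = N * ((1+b*X*P)*(1-a*X*P)*(a*X)*(b*X)*d1*d2*k4)"
    unfolding E4' dv' N_def Z_def using PP0 K0 nd1 nd2 nE1 nE2 nk1 nk2 nk3 nk4 Y0
    by (simp add: field_simps) algebra
  have F3: "cc a b s P n * G a b s P n (r+1) = N * (-(a*X-b*X)*(1+a*b*X^2*P^3)*d2*k3*E1c)"
  proof -
    have "cc a b s P n * G a b s P n (r+1) = -((1-b/a)*(1+a*b*X^2*P^3)/(k2*k4)*a*X *
       ((-1)^r * s^(r*r) * Y * (CB*(1-b*X*P)) * (CA*(1+a*X*P)) / ((PP*d1)*((E2c/Y)*K))) * (s^3 * s))"
      unfolding cv' E3' by (simp add: mult_ac)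
    also have "s^3 * s = P^2" using Ps by (simp add: power2_eq_square power3_eq_cube)
    finally have eq: "cc a b s P n * G a b s P n (r+1) = -((1-b/a)*(1+a*b*X^2*P^3)/(k2*k4)*a*X *
       ((-1)^r * s^(r*r) * Y * (CB*(1-b*X*P)) * (CA*(1+a*X*P)) / ((PP*d1)*((E2c/Y)*K))) * P^2)" .
    show ?thesis unfolding eq N_def Z_def using PP0 K0 nd1 nd2 nE1 nE2 nk2 nk3 nk4 Y0 a0
      by (simp add: field_simps) algebra
  qed
  have PI: "(1-b*X*P^2)*(1+a*X*P^2)*k2*E1c*E2c = (Y-b*X)*(Y+a*X)*k2*k3*k4
     + (-(a*X-b*X)*(1+a*b*X^2*P^3)*d2*k3*E1c) + (1+b*X*P)*(1-a*X*P)*(a*X)*(b*X)*d1*d2*k4"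
    unfolding d1_def d2_def E1c_def E2c_def k1_def k2_def k3_def k4_def by algebra
  have "G a b s P (n+1) (r+2) = G a b s P n (r+2) + cc a b s P n * G a b s P n (r+1) + dd a b s P n * G a b s P n' r"
    unfolding F0 F1 F3 F4 PI by (simp only: distrib_left)
  then show ?thesis by (simp add: n_def)
qed

lemma G0[simp]: "G a b s P n 0 = 1" by (simp add: G_def)

lemma G1: "G a b s P n 1 = -(s*(1-b*P^n*P)*(1+a*P^n*P)/((1-P)*(1-a*b*(P^n)^2*P^2)))"
proof -
  have e1: "b*P^(n+2)/P^1 = b*P^n*P" using P0 by (simp add: power_add power2_eq_square)
  have e2: "a*P^(n+2)/P^1 = a*P^n*P" using P0 by (simp add: power_add power2_eq_square)
  have pn: "(P^n)^2 = P^(2*n)" by (simp add: power_mult[symmetric] mult.commute)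
  have e3: "a*b*P^(2*n+3)/P^1 = a*b*(P^n)^2*P^2" unfolding pn using P0
    by (simp add: power_add power2_eq_square numeral_3_eq_3)
  have q: "\<And>x. qpoch x P 1 = 1 - x" by (simp add: qpoch_def)
  show ?thesis unfolding G_def e1 e2 e3 q by simp
qed

lemma rec1: "G a b s P (n+1) 1 = G a b s P n 1 + cc a b s P n * G a b s P n 0"
proof -
  define X where "X = P^n"
  define D where "D = 1 - P"
  define k2 where "k2 = 1-a*b*X^2*P^2"
  define k4 where "k4 = 1-a*b*X^2*P^4"
  have X2: "X^2 = P^(2*n)" unfolding X_def by (simp add: power_mult[symmetric] mult.commute)
  have nD: "D \<noteq> 0" using h1[of 1] D_def by auto
  have nk2: "k2 \<noteq> 0" using h2[of "2*n+2"] unfolding k2_def X2 by (auto simp: power_add mult_ac power2_eq_square)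
  have nk4: "k4 \<noteq> 0" using h2[of "2*n+4"] unfolding k4_def X2 by (auto simp: power_add mult_ac power2_eq_square)
  have g1: "G a b s P (n+1) 1 = -(s*(1-b*X*P^2)*(1+a*X*P^2)/(D*k4))"
    unfolding G1 D_def k4_def X_def by (simp add: power2_eq_square mult_ac numeral_Bit0)
  have g0: "G a b s P n 1 = -(s*(1-b*X*P)*(1+a*X*P)/(D*k2))"
    unfolding G1 D_def k2_def X_def by (simp add: mult_ac)
  have cv: "cc a b s P n = (1 - b/a)*(1 + a*b*X^2*P^3)/(k2*k4)*a * s*P*X"
  proof -
    have "s^3 = s*P" using Ps by (simp add: power3_eq_cube power2_eq_square)
    then show ?thesis unfolding cc_def k2_def k4_def X2 by (simp add: power_add X_def mult_ac power2_eq_square)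
  qed
  show ?thesis unfolding g1 g0 cv G0 using nD nk2 nk4 a0
    apply (simp add: field_simps)
    unfolding D_def k2_def k4_def by algebra
qed

end

definition H :: "complex \<Rightarrow> complex \<Rightarrow> complex \<Rightarrow> complex \<Rightarrow> nat \<Rightarrow> complex" where
 "H a b s P k = s^k * qpoch (b*P) P k * qpoch (-(a*P)) P k / (qpoch P P k * qpoch (a*b*P^2) P k)"

lemma H0[simp]: "H a b s P 0 = 1" by (simp add: H_def)

lemma H_Suc: "H a b s P (Suc k) = H a b s P k * (s * (1 - b*P*P^k) * (1 + a*P*P^k) / ((1 - P*P^k) * (1 - a*b*P^2*P^k)))"
  unfolding H_def qpoch_Suc by (simp add: divide_inverse inverse_mult_distrib mult_ac)

lemma G_Suc: assumes P0: "P \<noteq> 0" shows "G a b s P n (Suc m) = G a b s P n m * (-(s^(2*m+1)) * (1 - b*P^(n+2)/P^(Suc m))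
   * (1 + a*P^(n+2)/P^(Suc m)) / ((1-P^(Suc m)) * (1 - a*b*P^(2*n+3)/P^(Suc m))))"
proof -
  have sh: "\<And>y. y/P^(Suc m) * P = y/P^m" using P0 by (simp add: field_simps)
  have q1: "\<And>y. qpoch (y/P^(Suc m)) P (Suc m) = (1 - y/P^(Suc m)) * qpoch (y/P^m) P m"
    unfolding qpoch_Suc' sh ..
  have q2: "\<And>y. qpoch (-(y/P^(Suc m))) P (Suc m) = (1 + y/P^(Suc m)) * qpoch (-(y/P^m)) P m"
    unfolding qpoch_Suc' using sh by simp
  have e: "Suc m * Suc m = m*m + (2*m+1)" by simp
  show ?thesis unfolding G_def q1 q2 qpoch_Suc[of P P m] e power_add
    by (simp add: divide_inverse inverse_mult_distrib mult_ac)
qed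

context fixes a b s P :: complex
  assumes Ps: "P = s^2" and s0: "s \<noteq> 0" and a0: "a \<noteq> 0" and b0: "b \<noteq> 0"
  and h1: "\<And>e. e \<ge> 1 \<Longrightarrow> P^e \<noteq> 1"
  and h2: "\<And>e. e \<ge> 2 \<Longrightarrow> a*b*P^e \<noteq> 1"
  and h3: "\<And>e. e \<ge> 1 \<Longrightarrow> b*P^e \<noteq> 1"
  and h4: "\<And>e. a*P^e \<noteq> -1"
begin

lemma recG: assumes "m \<le> n+1"
  shows "G a b s P (n+1) m = G a b s P n m + (if 1 \<le> m then cc a b s P n * G a b s P n (m-1) else 0)
     + (if 2 \<le> m then dd a b s P n * G a b s P (n-1) (m-2) else 0)"
proof (cases m)
  case 0 then show ?thesis by (simp add: G_def)
next
  case (Suc m1)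
  show ?thesis
  proof (cases m1)
    case 0 then show ?thesis using Suc rec1[OF Ps s0 a0 b0 h1 h2 h3 h4, of n] by simp
  next
    case (Suc r)
    with \<open>m = Suc m1\<close> assms obtain n' where n': "n = Suc n'" and rn: "r \<le> n'"
      by (cases n) auto
    have "m = r+2" using Suc \<open>m = Suc m1\<close> by simp
    then show ?thesis using rec2[OF Ps s0 a0 b0 h1 h2 h3 h4 rn] n' by (simp add: numeral_2_eq_2)
  qed
qed

end

definition cvt :: "complex \<Rightarrow> complex \<Rightarrow> complex \<Rightarrow> nat \<Rightarrow> nat \<Rightarrow> complex" where
 "cvt q b c N k = qpoch (inverse q ^ N) q k * qpoch b q k / (qpoch q q k * qpoch c q k) * q^k"

lemma cvt_step: assumes q0: "q \<noteq> 0" and qk: "q*q^k \<noteq> 1"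
  shows "cvt q b c (Suc N) (Suc k) = cvt q b c N (Suc k) - inverse q ^ N * (1-b)/(1-c) * cvt q (b*q) (c*q) N k"
proof -
  define t where "t = inverse q"
  have tq: "t*q = 1" using q0 by (simp add: t_def)
  have A: "qpoch (t^Suc N) q (Suc k) = (1 - t^Suc N) * qpoch (t^N) q k"
  proof -
    have e: "t^Suc N * q = t^N" by (metis mult.commute mult.left_commute mult_1_right power_Suc tq)
    show ?thesis by (simp only: qpoch_Suc' e)
  qed
  have B: "qpoch (t^N) q (Suc k) = qpoch (t^N) q k * (1 - t^N*q^k)" by (rule qpoch_Suc)
  have Cb: "qpoch b q (Suc k) = (1-b)*qpoch (b*q) q k" by (rule qpoch_Suc')
  have Cc: "qpoch c q (Suc k) = (1-c)*qpoch (c*q) q k" by (rule qpoch_Suc')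
  have Dq: "qpoch q q (Suc k) = qpoch q q k * (1 - q*q^k)" by (rule qpoch_Suc)
  define R where "R = qpoch (t^N) q k * (1-b) * qpoch (b*q) q k * q^k / (qpoch q q k * (1-c) * qpoch (c*q) q k)"
  have L: "cvt q b c (Suc N) (Suc k) = R * ((1 - t^Suc N)*q/(1 - q*q^k))"
    unfolding cvt_def t_def[symmetric] A Cb Cc Dq R_def by (simp add: divide_inverse inverse_mult_distrib mult_ac)
  have M: "cvt q b c N (Suc k) = R * ((1 - t^N*q^k)*q/(1-q*q^k))"
    unfolding cvt_def t_def[symmetric] B Cb Cc Dq R_def by (simp add: divide_inverse inverse_mult_distrib mult_ac)
  have T: "t^N*(1-b)/(1-c)*cvt q (b*q) (c*q) N k = R * t^N"
    unfolding cvt_def t_def[symmetric] R_def by (simp add: divide_inverse inverse_mult_distrib mult_ac)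
  have key: "(1 - t^Suc N)*q/(1 - q*q^k) = (1 - t^N*q^k)*q/(1-q*q^k) - t^N"
  proof -
    have nz: "1 - q*q^k \<noteq> 0" using qk by simp
    have "(1 - t^Suc N)*q = (1 - t^N*q^k)*q - t^N*(1 - q*q^k)"
      using tq by (simp add: algebra_simps)
    then show ?thesis using nz by (simp add: field_simps)
  qed
  have "cvt q b c (Suc N) (Suc k) = cvt q b c N (Suc k) - t^N*(1-b)/(1-c)*cvt q (b*q) (c*q) N k"
    unfolding L M T key by (simp only: right_diff_distrib)
  then show ?thesis by (simp only: t_def)
qed

lemma cvt0[simp]: "cvt q b c N 0 = 1" by (simp add: cvt_def)

lemma cvt_last: assumes "q \<noteq> 0" shows "cvt q b c N (Suc N) = 0"
proof -
  have "inverse q ^ N * q ^ N = 1" using assms by (simp add: power_mult_distrib[symmetric])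
  then have "qpoch (inverse q ^ N) q (Suc N) = 0" unfolding qpoch_Suc by simp
  then show ?thesis by (simp add: cvt_def)
qed

lemma qcv: assumes q0: "q \<noteq> 0" and hq: "\<And>k. 1 \<le> k \<Longrightarrow> k \<le> N \<Longrightarrow> q^k \<noteq> 1"
  and hc: "\<And>i. i < N \<Longrightarrow> c*q^i \<noteq> 1"
  shows "(\<Sum>k\<le>N. cvt q b c N k) = (\<Prod>i<N. b - c*q^i) / qpoch c q N"
  using hq hc
proof (induction N arbitrary: b c)
  case 0
  then show ?case by simp
next
  case (Suc N)
  have IH1: "(\<Sum>k\<le>N. cvt q b c N k) = (\<Prod>i<N. b - c*q^i) / qpoch c q N"
    using Suc.IH[where b=b and c=c] Suc.prems by auto
  have IH2: "(\<Sum>k\<le>N. cvt q (b*q) (c*q) N k) = (\<Prod>i<N. b*q - c*q*q^i) / qpoch (c*q) q N"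
  proof -
    have "\<And>i. i < N \<Longrightarrow> c*q*q^i \<noteq> 1" using Suc.prems(2)[of "Suc i" for i] by (simp add: mult.assoc)
    then show ?thesis using Suc.IH[where b="b*q" and c="c*q"] Suc.prems by auto
  qed
  define t where "t = inverse q"
  have st: "\<And>k. k \<le> N \<Longrightarrow> cvt q b c (Suc N) (Suc k) = cvt q b c N (Suc k) - t^N * (1-b)/(1-c) * cvt q (b*q) (c*q) N k"
    unfolding t_def by (rule cvt_step[OF q0]) (use Suc.prems(1)[of "Suc k" for k] in auto)
  have "(\<Sum>k\<le>Suc N. cvt q b c (Suc N) k) = 1 + (\<Sum>k\<le>N. cvt q b c (Suc N) (Suc k))"
    by (simp only: sum.atMost_Suc_shift cvt0)
  also have "\<dots> = 1 + (\<Sum>k\<le>N. cvt q b c N (Suc k)) - t^N * (1-b)/(1-c) * (\<Sum>k\<le>N. cvt q (b*q) (c*q) N k)"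
    by (simp add: st sum_subtractf sum_distrib_left)
  also have "1 + (\<Sum>k\<le>N. cvt q b c N (Suc k)) = (\<Sum>k\<le>Suc N. cvt q b c N k)"
    by (simp only: sum.atMost_Suc_shift cvt0)
  also have "\<dots> = (\<Sum>k\<le>N. cvt q b c N k)" using cvt_last[OF q0] by simp
  finally have S: "(\<Sum>k\<le>Suc N. cvt q b c (Suc N) k) = (\<Prod>i<N. b - c*q^i) / qpoch c q N
     - t^N * (1-b)/(1-c) * ((\<Prod>i<N. b*q - c*q*q^i) / qpoch (c*q) q N)" unfolding IH1 IH2 .
  define Pr where "Pr = (\<Prod>i<N. b - c*q^i)"
  define QN where "QN = qpoch c q N"
  define Q' where "Q' = qpoch (c*q) q N"
  have pr2: "(\<Prod>i<N. b*q - c*q*q^i) = q^N * Pr"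
  proof -
    have "(\<Prod>i<N. b*q - c*q*q^i) = (\<Prod>i<N. q * (b - c*q^i))" by (rule prod.cong) (auto simp: algebra_simps)
    then show ?thesis by (simp add: prod.distrib Pr_def)
  qed
  have pr1: "(\<Prod>i<Suc N. b - c*q^i) = Pr * (b - c*q^N)" by (simp add: Pr_def)
  have qs1: "qpoch c q (Suc N) = QN * (1 - c*q^N)" by (simp add: QN_def qpoch_Suc)
  have qs2: "qpoch c q (Suc N) = (1-c) * Q'" by (simp add: Q'_def qpoch_Suc')
  have c1: "1 - c \<noteq> 0" using Suc.prems(2)[of 0] by auto
  have c2: "1 - c*q^N \<noteq> 0" using Suc.prems(2)[of N] by auto
  have QN0: "QN \<noteq> 0" unfolding QN_def by (rule qpoch_nz) (use Suc.prems(2) in auto)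
  have Q': "Q' = QN * (1 - c*q^N) / (1-c)" using qs1 qs2 c1 by (simp add: field_simps)
  have tq: "t^N * q^N = 1" using q0 by (simp add: t_def power_mult_distrib[symmetric])
  have X: "t^N*(1-b)/(1-c)*(q^N*Pr/(QN*(1-c*q^N)/(1-c))) = (t^N*q^N) * ((1-b)*Pr/(QN*(1-c*q^N))) * ((1-c)/(1-c))"
    by (simp add: divide_inverse inverse_mult_distrib mult_ac)
  have Y: "Pr*(b - c*q^N)/(QN*(1-c*q^N)) = Pr/QN - (1-b)*Pr/(QN*(1-c*q^N))"
    using c2 QN0 by (simp add: field_simps)
  show ?case unfolding S pr1 pr2 qs1 Pr_def[symmetric] QN_def[symmetric] Q'_def[symmetric] Q' X tq
    using c1 Y by simp
qed

context fixes a b s P :: complex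
  assumes Ps: "P = s^2" and s0: "s \<noteq> 0" and a0: "a \<noteq> 0" and b0: "b \<noteq> 0"
  and h1: "\<And>e. e \<ge> 1 \<Longrightarrow> P^e \<noteq> 1"
  and h2: "\<And>e. e \<ge> 2 \<Longrightarrow> a*b*P^e \<noteq> 1"
  and h3: "\<And>e. e \<ge> 1 \<Longrightarrow> b*P^e \<noteq> 1"
  and h4: "\<And>e. a*P^e \<noteq> -1"
begin

lemma P0': "P \<noteq> 0" using Ps s0 by simp

lemma rho_sigma_tau:
  assumes mk: "n = m + k"
  shows "-(s^(2*m+1)) * (1 - b*P^(n+2)/P^(Suc m)) * (1 + a*P^(n+2)/P^(Suc m)) / ((1-P^(Suc m)) * (1 - a*b*P^(2*n+3)/P^(Suc m)))
    = (s * (1 - b*P*P^k) * (1 + a*P*P^k) / ((1 - P*P^k) * (1 - a*b*P^2*P^k)))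
    * ((1 - inverse P ^ (n+1) * P^m) * (1 - inverse (a*b*P^(n+2)) * P^m) * P / ((1 - P*P^m) * (1 - inverse (a*b*P^(2*(n+1))) * P^m)))"
proof -
  define M where "M = P^m"
  define W where "W = P^k"
  have P0: "P \<noteq> 0" by (rule P0')
  have M0: "M \<noteq> 0" and W0: "W \<noteq> 0" using P0 by (auto simp: M_def W_def)
  have Pn: "P^n = M*W" by (simp add: mk M_def W_def power_add)
  define u1 where "u1 = 1 - b*W*P"
  define u2 where "u2 = 1 + a*W*P"
  define D1 where "D1 = 1 - P*M"
  define D2 where "D2 = 1 - a*b*M*W^2*P^2"
  define D3 where "D3 = 1 - P*W"
  define D4 where "D4 = 1 - a*b*P^2*W"
  have nD1: "D1 \<noteq> 0" using h1[of "Suc m"] by (simp add: D1_def M_def)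
  have nD3: "D3 \<noteq> 0" using h1[of "Suc k"] by (simp add: D3_def W_def)
  have nD4: "D4 \<noteq> 0" using h2[of "k+2"] by (simp add: D4_def W_def power_add mult_ac power2_eq_square)
  have nD2: "D2 \<noteq> 0"
  proof -
    have eq: "a*b*M*W^2*P^2 = a*b*P^(m + 2*k + 2)"
      by (simp add: M_def W_def power_add power_mult[symmetric] mult_ac) (simp add: power2_eq_square)
    show ?thesis unfolding D2_def eq using h2[of "m+2*k+2"] by auto
  qed
  have r1: "s^(2*m+1) = M* s" using Ps by (simp add: M_def power_mult)
  have r2: "P^(n+2)/P^(Suc m) = W*P" using P0 M0 by (simp add: Pn power_add M_def[symmetric] field_simps power2_eq_square)
  have r3: "P^(2*n+3)/P^(Suc m) = M*W^2*P^2"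
  proof -
    have "P^(2*n+3) = (M*W)^2*P^3" by (simp add: Pn[symmetric] power_add power_mult[symmetric] mult.commute)
    then show ?thesis using P0 M0 by (simp add: M_def[symmetric] field_simps power2_eq_square numeral_3_eq_3)
  qed
  have r4: "P^(Suc m) = P*M" by (simp add: M_def)
  have LHS: "-(s^(2*m+1)) * (1 - b*P^(n+2)/P^(Suc m)) * (1 + a*P^(n+2)/P^(Suc m)) / ((1-P^(Suc m)) * (1 - a*b*P^(2*n+3)/P^(Suc m)))
     = -(M* s*u1*u2/(D1*D2))"
  proof -
    have "b*P^(n+2)/P^(Suc m) = b*W*P" "a*P^(n+2)/P^(Suc m) = a*W*P" "a*b*P^(2*n+3)/P^(Suc m) = a*b*M*W^2*P^2"
      using r2 r3 by (simp_all only: times_divide_eq_right[symmetric] mult.assoc)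
    then show ?thesis unfolding r1 r4 u1_def u2_def D1_def D2_def by simp
  qed
  have sig: "s * (1 - b*P*P^k) * (1 + a*P*P^k) / ((1 - P*P^k) * (1 - a*b*P^2*P^k)) = s*u1*u2/(D3*D4)"
    unfolding u1_def u2_def D3_def D4_def W_def by (simp add: mult_ac)
  have t1: "1 - inverse P ^ (n+1) * P^m = -D3/(W*P)"
    using P0 W0 M0 unfolding D3_def by (simp add: Pn M_def[symmetric] power_inverse field_simps)
  have t2: "1 - inverse (a*b*P^(n+2)) * P^m = -D4/(a*b*W*P^2)"
    using P0 W0 M0 a0 b0 unfolding D4_def by (simp add: Pn power_add M_def[symmetric] field_simps power2_eq_square)
  have t3: "1 - inverse (a*b*P^(2*(n+1))) * P^m = -D2/(a*b*M*W^2*P^2)"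
  proof -
    have "P^(2*(n+1)) = (M*W)^2*P^2" by (simp add: Pn[symmetric] power_mult[symmetric] power_mult_distrib mult.commute) (simp add: power2_eq_square)
    then show ?thesis using P0 W0 M0 a0 b0 unfolding D2_def by (simp add: M_def[symmetric] field_simps power2_eq_square)
  qed
  have tau: "(1 - inverse P ^ (n+1) * P^m) * (1 - inverse (a*b*P^(n+2)) * P^m) * P / ((1 - P*P^m) * (1 - inverse (a*b*P^(2*(n+1))) * P^m))
     = -(M*D3*D4/(D1*D2))"
  proof -
    have "(1 - inverse P ^ (n+1) * P^m) * (1 - inverse (a*b*P^(n+2)) * P^m) * P / ((1 - P*P^m) * (1 - inverse (a*b*P^(2*(n+1))) * P^m))
      = (-D3/(W*P)) * (-D4/(a*b*W*P^2)) * P / ((1 - P*M) * (-D2/(a*b*M*W^2*P^2)))"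
      by (simp only: t1 t2 t3 M_def)
    also have "\<dots> = -(M*D3*D4/(D1*D2))" unfolding D1_def[symmetric]
      using P0 W0 M0 a0 b0 nD1 nD2 nD3 nD4 by (simp add: field_simps power2_eq_square)
    finally show ?thesis .
  qed
  show ?thesis unfolding LHS sig tau using nD1 nD2 nD3 nD4 by (simp add: field_simps)
qed

lemma vanish: "(\<Sum>m\<le>n+1. G a b s P n m * H a b s P (n+1-m)) = 0"
proof -
  define N where "N = n+1"
  define c0 where "c0 = inverse (a*b*P^(n+2))"
  define d0 where "d0 = inverse (a*b*P^(2*(n+1)))"
  have P0: "P \<noteq> 0" by (rule P0')
  have claim: "m \<le> N \<Longrightarrow> G a b s P n m * H a b s P (N-m) = H a b s P N * cvt P c0 d0 N m" for m
  proof (induction m)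
    case 0 show ?case by (simp add: G_def cvt_def)
  next
    case (Suc m)
    then have mN: "m < N" by simp
    define k where "k = n - m"
    have nk: "n = m + k" and Nm: "N - m = Suc k" and Nm1: "N - Suc m = k" using mN by (auto simp: k_def N_def)
    have IH: "G a b s P n m * H a b s P (Suc k) = H a b s P N * cvt P c0 d0 N m" using Suc.IH mN Nm by simp
    have cs: "cvt P c0 d0 N (Suc m) = cvt P c0 d0 N m * ((1 - inverse P ^ N * P^m) * (1 - c0 * P^m) * P / ((1 - P*P^m) * (1 - d0*P^m)))"
      unfolding cvt_def qpoch_Suc by (simp add: divide_inverse inverse_mult_distrib mult_ac)
    note gs = G_Suc[OF P0, of a b s n m]
    note hs = H_Suc[of a b s P k]
    note rst = rho_sigma_tau[OF nk, folded c0_def d0_def N_def]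
    define \<sigma> where "\<sigma> = s * (1 - b*P*P^k) * (1 + a*P*P^k) / ((1 - P*P^k) * (1 - a*b*P^2*P^k))"
    define \<tau> where "\<tau> = (1 - inverse P ^ N * P^m) * (1 - c0 * P^m) * P / ((1 - P*P^m) * (1 - d0*P^m))"
    have "G a b s P n (Suc m) * H a b s P k = G a b s P n m * (\<sigma>*\<tau>) * H a b s P k"
      unfolding gs rst \<sigma>_def \<tau>_def N_def by simp
    also have "\<dots> = (G a b s P n m * (H a b s P k * \<sigma>)) * \<tau>" by (simp add: mult_ac)
    also have "\<dots> = H a b s P N * cvt P c0 d0 N (Suc m)" unfolding hs[folded \<sigma>_def, symmetric] IH cs \<tau>_def by (simp add: mult_ac)
    finally show ?case unfolding Nm1 .
  qed
  have "(\<Sum>m\<le>n+1. G a b s P n m * H a b s P (n+1-m)) = (\<Sum>m\<le>N. H a b s P N * cvt P c0 d0 N m)"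
    unfolding N_def[symmetric] by (rule sum.cong) (auto simp: claim)
  also have "\<dots> = H a b s P N * (\<Sum>m\<le>N. cvt P c0 d0 N m)" by (simp add: sum_distrib_left)
  also have "(\<Sum>m\<le>N. cvt P c0 d0 N m) = (\<Prod>i<N. c0 - d0*P^i) / qpoch d0 P N"
  proof (rule qcv[OF P0])
    show "\<And>k. 1 \<le> k \<Longrightarrow> k \<le> N \<Longrightarrow> P^k \<noteq> 1" using h1 by auto
    fix i assume "i < N"
    show "d0 * P^i \<noteq> 1"
    proof
      assume "d0 * P^i = 1"
      then have "P^i = a*b*P^(2*(n+1))" using a0 b0 P0 by (simp add: d0_def field_simps)
      also have "P^(2*(n+1)) = P^i * P^(2*(n+1)-i)" using \<open>i < N\<close> by (simp add: N_def power_add[symmetric])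
      finally have "a*b*P^(2*(n+1)-i) = 1" using P0 by (simp add: field_simps)
      moreover have "2*(n+1)-i \<ge> 2" using \<open>i < N\<close> by (simp add: N_def)
      ultimately show False using h2 by blast
    qed
  qed
  also have "(\<Prod>i<N. c0 - d0*P^i) = 0"
  proof -
    have "c0 - d0*P^n = 0"
    proof -
      have "P^(2*(n+1)) = P^(n+2) * P^n" by (simp add: power_add[symmetric] mult_2)
      then show ?thesis using a0 b0 P0 by (simp add: c0_def d0_def field_simps)
    qed
    moreover have "n \<in> {..<N}" by (simp add: N_def)
    ultimately show ?thesis by (metis (no_types, lifting) finite_lessThan prod_zero_iff)
  qed
  finally show ?thesis by simp
qed

end

definition Acoef :: "complex \<Rightarrow> complex \<Rightarrow> complex \<Rightarrow> complex \<Rightarrow> nat \<Rightarrow> nat \<Rightarrow> complex" where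
  "Acoef a b s P n j = (\<Sum>m\<le>j. G a b s P n m * H a b s P (j-m))"

definition Spoly :: "complex \<Rightarrow> complex \<Rightarrow> complex \<Rightarrow> complex \<Rightarrow> nat \<Rightarrow> complex \<Rightarrow> complex" where
  "Spoly a b s P n \<mu> = (\<Sum>j\<le>n. Acoef a b s P n j * \<mu>^(n-j))"

lemma shift1: fixes j :: nat and F :: "nat \<Rightarrow> nat \<Rightarrow> complex" shows "(\<Sum>m\<le>j. (if 1 \<le> m then F (m-1) (j-m) else 0)) = (if 1 \<le> j then (\<Sum>m\<le>j-1. F m (j-1-m)) else (0::complex))"
proof (cases j)
  case 0 then show ?thesis by simp
next
  case (Suc j')
  then show ?thesis by (simp only: sum.atMost_Suc_shift) simp
qed

lemma shift2: fixes j :: nat and F :: "nat \<Rightarrow> nat \<Rightarrow> complex" shows "(\<Sum>m\<le>j. (if 2 \<le> m then F (m-2) (j-m) else 0)) = (if 2 \<le> j then (\<Sum>m\<le>j-2. F m (j-2-m)) else (0::complex))"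
proof (cases j)
  case 0 then show ?thesis by simp
next
  case (Suc j')
  show ?thesis
  proof (cases j')
    case 0 then show ?thesis using Suc by simp
  next
    case (Suc j'')
    then show ?thesis using \<open>j = Suc j'\<close> by (simp only: sum.atMost_Suc_shift) (simp add: numeral_2_eq_2)
  qed
qed

context fixes a b s P :: complex
  assumes Ps: "P = s^2" and s0: "s \<noteq> 0" and a0: "a \<noteq> 0" and b0: "b \<noteq> 0"
  and h1: "\<And>e. e \<ge> 1 \<Longrightarrow> P^e \<noteq> 1"
  and h2: "\<And>e. e \<ge> 2 \<Longrightarrow> a*b*P^e \<noteq> 1"
  and h3: "\<And>e. e \<ge> 1 \<Longrightarrow> b*P^e \<noteq> 1"
  and h4: "\<And>e. a*P^e \<noteq> -1"
begin

lemma Arec: assumes "j \<le> n+1"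
  shows "Acoef a b s P (n+1) j = Acoef a b s P n j + (if 1 \<le> j then cc a b s P n * Acoef a b s P n (j-1) else 0)
     + (if 2 \<le> j then dd a b s P n * Acoef a b s P (n-1) (j-2) else 0)"
proof -
  have "Acoef a b s P (n+1) j = (\<Sum>m\<le>j. G a b s P n m * H a b s P (j-m)
     + (if 1 \<le> m then cc a b s P n * G a b s P n (m-1) * H a b s P (j-m) else 0)
     + (if 2 \<le> m then dd a b s P n * G a b s P (n-1) (m-2) * H a b s P (j-m) else 0))"
    unfolding Acoef_def
  proof (rule sum.cong)
    fix m assume "m \<in> {..j}"
    then have "m \<le> n+1" using assms by simp
    then show "G a b s P (n+1) m * H a b s P (j-m) = G a b s P n m * H a b s P (j-m)
     + (if 1 \<le> m then cc a b s P n * G a b s P n (m-1) * H a b s P (j-m) else 0)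
     + (if 2 \<le> m then dd a b s P n * G a b s P (n-1) (m-2) * H a b s P (j-m) else 0)"
      by (subst recG[OF Ps s0 a0 b0 h1 h2 h3 h4 \<open>m \<le> n+1\<close>]) (auto simp: distrib_right)
  qed simp
  also have "\<dots> = Acoef a b s P n j + (\<Sum>m\<le>j. (if 1 \<le> m then cc a b s P n * G a b s P n (m-1) * H a b s P (j-m) else 0))
     + (\<Sum>m\<le>j. (if 2 \<le> m then dd a b s P n * G a b s P (n-1) (m-2) * H a b s P (j-m) else 0))"
    unfolding Acoef_def by (simp add: sum.distrib)
  also have "(\<Sum>m\<le>j. (if 1 \<le> m then cc a b s P n * G a b s P n (m-1) * H a b s P (j-m) else 0))
     = (if 1 \<le> j then cc a b s P n * Acoef a b s P n (j-1) else 0)"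
    using shift1[of "\<lambda>m r. cc a b s P n * G a b s P n m * H a b s P r" j]
    by (simp add: Acoef_def sum_distrib_left mult.assoc)
  also have "(\<Sum>m\<le>j. (if 2 \<le> m then dd a b s P n * G a b s P (n-1) (m-2) * H a b s P (j-m) else 0))
     = (if 2 \<le> j then dd a b s P n * Acoef a b s P (n-1) (j-2) else 0)"
    using shift2[of "\<lambda>m r. dd a b s P n * G a b s P (n-1) m * H a b s P r" j]
    by (simp add: Acoef_def sum_distrib_left mult.assoc)
  finally show ?thesis .
qed

lemma Srec: "Spoly a b s P (n+1) \<mu> = (\<mu> + cc a b s P n) * Spoly a b s P n \<mu>
    + (if 1 \<le> n then dd a b s P n * Spoly a b s P (n-1) \<mu> else 0)"
proof -
  have van: "Acoef a b s P n (n+1) = 0"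
    unfolding Acoef_def using vanish[OF Ps s0 a0 b0 h1 h2 h3 h4, of n] by simp
  have "Spoly a b s P (n+1) \<mu> = (\<Sum>j\<le>n+1. Acoef a b s P n j * \<mu>^(n+1-j)
     + (if 1 \<le> j then cc a b s P n * Acoef a b s P n (j-1) * \<mu>^(n+1-j) else 0)
     + (if 2 \<le> j then dd a b s P n * Acoef a b s P (n-1) (j-2) * \<mu>^(n+1-j) else 0))"
    unfolding Spoly_def
  proof (rule sum.cong)
    fix j assume "j \<in> {..n+1}"
    then have "j \<le> n+1" by simp
    show "Acoef a b s P (n+1) j * \<mu>^(n+1-j) = Acoef a b s P n j * \<mu>^(n+1-j)
     + (if 1 \<le> j then cc a b s P n * Acoef a b s P n (j-1) * \<mu>^(n+1-j) else 0)
     + (if 2 \<le> j then dd a b s P n * Acoef a b s P (n-1) (j-2) * \<mu>^(n+1-j) else 0)"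
      by (subst Arec[OF \<open>j \<le> n+1\<close>]) (auto simp: distrib_right)
  qed simp
  also have "\<dots> = (\<Sum>j\<le>n+1. Acoef a b s P n j * \<mu>^(n+1-j))
     + (\<Sum>j\<le>n+1. (if 1 \<le> j then cc a b s P n * Acoef a b s P n (j-1) * \<mu>^(n+1-j) else 0))
     + (\<Sum>j\<le>n+1. (if 2 \<le> j then dd a b s P n * Acoef a b s P (n-1) (j-2) * \<mu>^(n+1-j) else 0))"
    by (simp add: sum.distrib)
  also have "(\<Sum>j\<le>n+1. Acoef a b s P n j * \<mu>^(n+1-j)) = \<mu> * Spoly a b s P n \<mu>"
  proof -
    have "(\<Sum>j\<le>n+1. Acoef a b s P n j * \<mu>^(n+1-j)) = (\<Sum>j\<le>n. Acoef a b s P n j * \<mu>^(n+1-j))"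
      using van by simp
    also have "\<dots> = (\<Sum>j\<le>n. \<mu> * (Acoef a b s P n j * \<mu>^(n-j)))"
      by (rule sum.cong) (auto simp: Suc_diff_le)
    finally show ?thesis by (simp add: Spoly_def sum_distrib_left)
  qed
  also have "(\<Sum>j\<le>n+1. (if 1 \<le> j then cc a b s P n * Acoef a b s P n (j-1) * \<mu>^(n+1-j) else 0))
     = cc a b s P n * Spoly a b s P n \<mu>"
    using shift1[of "\<lambda>m r. cc a b s P n * Acoef a b s P n m * \<mu>^r" "n+1"]
    by (simp add: Spoly_def sum_distrib_left mult.assoc)
  also have "(\<Sum>j\<le>n+1. (if 2 \<le> j then dd a b s P n * Acoef a b s P (n-1) (j-2) * \<mu>^(n+1-j) else 0))
     = (if 1 \<le> n then dd a b s P n * Spoly a b s P (n-1) \<mu> else 0)"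
    using shift2[of "\<lambda>m r. dd a b s P n * Acoef a b s P (n-1) m * \<mu>^r" "n+1"]
    by (simp add: Spoly_def sum_distrib_left mult.assoc)
  finally show ?thesis by (simp add: algebra_simps)
qed

end

definition coefA :: "complex \<Rightarrow> complex \<Rightarrow> complex \<Rightarrow> complex \<Rightarrow> nat \<Rightarrow> nat \<Rightarrow> complex" where
 "coefA a b s P n j = qpoch (inverse (b*P^(n+1))) P j * qpoch (- inverse (a*P^(n+1))) P j
    / (qpoch P P j * qpoch (inverse (a*b*P^(2*n+2))) P j) * (-1)^j * s^j"

definition termA :: "complex \<Rightarrow> complex \<Rightarrow> complex \<Rightarrow> complex \<Rightarrow> nat \<Rightarrow> nat \<Rightarrow> nat \<Rightarrow> complex" where
 "termA a b s P n j k = (qpoch (inverse (P^j)) P k * qpoch (a*b*P^(2*n+3)/P^j) P k * qpoch (b*P) P k * qpoch (-(a*P)) P k)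
    / (qpoch P P k * qpoch (a*b*P^2) P k * qpoch (b*P^(n+2)/P^j) P k * qpoch (-(a*P^(n+2)/P^j)) P k) * P^k"

definition Xf :: "complex \<Rightarrow> complex \<Rightarrow> complex \<Rightarrow> complex \<Rightarrow> nat \<Rightarrow> nat \<Rightarrow> nat \<Rightarrow> complex" where
 "Xf a b s P n j k = coefA a b s P n j * qpoch (inverse (P^j)) P k * qpoch (a*b*P^(2*n+3)/P^j) P k
    / (qpoch (b*P^(n+2)/P^j) P k * qpoch (-(a*P^(n+2)/P^j)) P k) * s^k"

lemma qrev: assumes y0: "y \<noteq> 0" and P0: "P \<noteq> 0"
  shows "qpoch (inverse y) P m = (-1)^m * inverse y ^ m * P^(\<Sum>i<m. i) * qpoch (y*P/P^m) P m"
proof (induction m)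
  case 0 then show ?case by simp
next
  case (Suc m)
  have e: "y*P/P^(Suc m) * P = y*P/P^m" using P0 by (simp add: field_simps)
  have e2: "y*P/P^(Suc m) = y/P^m" using P0 by (simp add: field_simps)
  have "qpoch (inverse y) P (Suc m) = qpoch (inverse y) P m * (1 - inverse y * P^m)" by (rule qpoch_Suc)
  also have "\<dots> = (-1)^m * inverse y ^ m * P^(\<Sum>i<m. i) * qpoch (y*P/P^m) P m * (1 - inverse y * P^m)"
    using Suc.IH by simp
  also have "(1 - inverse y * P^m) = -(inverse y * P^m) * (1 - y/P^m)" using y0 P0 by (simp add: field_simps)
  finally have L: "qpoch (inverse y) P (Suc m) = (-1)^m * inverse y ^ m * P^(\<Sum>i<m. i) * qpoch (y*P/P^m) P m * (-(inverse y * P^m) * (1 - y/P^m))" .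
  have e3: "y/P^m * P = y*P/P^m" by simp
  have q: "qpoch (y*P/P^(Suc m)) P (Suc m) = (1 - y/P^m) * qpoch (y*P/P^m) P m"
    by (simp only: qpoch_Suc' e2 e3)
  show ?case unfolding L q by (simp add: power_add mult_ac)
qed

lemma gauss2: "2 * (\<Sum>i<m. i) + m = m*(m::nat)"
  by (induction m) (auto simp: algebra_simps)

context fixes a b s P :: complex
  assumes Ps: "P = s^2" and s0: "s \<noteq> 0" and a0: "a \<noteq> 0" and b0: "b \<noteq> 0"
  and h1: "\<And>e. e \<ge> 1 \<Longrightarrow> P^e \<noteq> 1"
  and h2: "\<And>e. e \<ge> 2 \<Longrightarrow> a*b*P^e \<noteq> 1"
  and h3: "\<And>e. e \<ge> 1 \<Longrightarrow> b*P^e \<noteq> 1"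
  and h4: "\<And>e. a*P^e \<noteq> -1"
begin

lemma coef_G: "coefA a b s P n m = G a b s P n m"
proof -
  have P0: "P \<noteq> 0" using Ps s0 by simp
  define ib where "ib = inverse (b*P^(n+1))"
  define ia where "ia = inverse (-(a*P^(n+1)))"
  define iab where "iab = inverse (a*b*P^(2*n+2))"
  define S where "S = P^(\<Sum>i<m. i)"
  define QB where "QB = qpoch (b*P^(n+2)/P^m) P m"
  define QA where "QA = qpoch (-(a*P^(n+2)/P^m)) P m"
  define QAB where "QAB = qpoch (a*b*P^(2*n+3)/P^m) P m"
  define PP where "PP = qpoch P P m"
  have rb: "qpoch (inverse (b*P^(n+1))) P m = (-1)^m * ib^m * S * QB"
    using qrev[of "b*P^(n+1)" P m] b0 P0 unfolding ib_def S_def QB_def by (simp add: mult_ac)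
  have ra: "qpoch (- inverse (a*P^(n+1))) P m = (-1)^m * ia^m * S * QA"
  proof -
    have "qpoch (- inverse (a*P^(n+1))) P m = qpoch (inverse (-(a*P^(n+1)))) P m" by simp
    also have "\<dots> = (-1)^m * ia^m * S * qpoch (-(a*P^(n+1))*P/P^m) P m"
      using qrev[of "-(a*P^(n+1))" P m] a0 P0 unfolding ia_def S_def by simp
    also have "-(a*P^(n+1))*P/P^m = -(a*P^(n+2)/P^m)" by (simp add: mult_ac)
    finally show ?thesis unfolding QA_def .
  qed
  have rab: "qpoch (inverse (a*b*P^(2*n+2))) P m = (-1)^m * iab^m * S * QAB"
  proof -
    have "qpoch (inverse (a*b*P^(2*n+2))) P m = (-1)^m * iab^m * S * qpoch (a*b*P^(2*n+2)*P/P^m) P m"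
      using qrev[of "a*b*P^(2*n+2)" P m] a0 b0 P0 unfolding iab_def S_def by simp
    also have "a*b*P^(2*n+2)*P/P^m = a*b*P^(2*n+3)/P^m" by (simp add: mult_ac power_add numeral_3_eq_3)
    finally show ?thesis unfolding QAB_def .
  qed
  have iprod: "ib^m * ia^m = (-1)^m * iab^m"
  proof -
    have e: "(b*P^(n+1)) * (-(a*P^(n+1))) = -(a*b*P^(2*n+2))"
    proof -
      have "P^(2*n+2) = P^(n+1)*P^(n+1)" by (simp add: power_add[symmetric] mult_2)
      then show ?thesis by (simp add: mult_ac) (metis mult.commute)
    qed
    have "ib * ia = inverse ((b*P^(n+1)) * (-(a*P^(n+1))))" unfolding ib_def ia_def by (simp only: inverse_mult_distrib)
    then have "ib * ia = -iab" unfolding e iab_def by simp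
    then show ?thesis by (metis power_mult_distrib mult_minus1 )
  qed
  have S0: "S \<noteq> 0" using P0 by (simp add: S_def)
  have iab0: "iab \<noteq> 0" using a0 b0 P0 by (simp add: iab_def)
  have sS: "s^(m*m) = S * s^m"
    unfolding S_def Ps gauss2[symmetric] by (simp add: power_add power_mult)
  have "coefA a b s P n m = QB*QA/(PP*QAB) * ((-1)^m * ib^m * S * ((-1)^m * ia^m * S) / ((-1)^m * iab^m * S) * (-1)^m * s^m)"
    unfolding coefA_def rb ra rab PP_def[symmetric] by (simp add: divide_inverse inverse_mult_distrib mult_ac)
  also have "(-1)^m * ib^m * S * ((-1)^m * ia^m * S) / ((-1)^m * iab^m * S) * (-1)^m * s^m = (-1)^m * s^(m*m)"
  proof -
    have "(-1)^m * ib^m * S * ((-1)^m * ia^m * S) = ((-1)^m)^2 * (ib^m * ia^m) * S * S" by (simp add: power2_eq_square mult_ac)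
    also have "\<dots> = ((-1)^m)^2 * ((-1)^m * iab^m) * S * S" unfolding iprod ..
    finally have "(-1)^m * ib^m * S * ((-1)^m * ia^m * S) / ((-1)^m * iab^m * S) = ((-1)^m)^2 * S"
      using S0 iab0 by (simp add: field_simps power2_eq_square)
    moreover have "((-1::complex)^m)^2 = 1" by (simp add: power_mult[symmetric])
    ultimately show ?thesis unfolding sS by (simp add: mult_ac)
  qed
  finally show ?thesis unfolding G_def QB_def QA_def QAB_def PP_def by (simp add: divide_inverse mult_ac)
qed

lemma Xf_step: assumes "Suc j \<le> n"
  shows "Xf a b s P n (Suc j) (Suc k) = Xf a b s P n j k"
proof -
  have P0: "P \<noteq> 0" using Ps s0 by simp
  have sh: "\<And>y. y/P^(Suc j) * P = y/P^j" using P0 by (simp add: field_simps)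
  have q1: "\<And>y. qpoch (y/P^(Suc j)) P (Suc k) = (1 - y/P^(Suc j)) * qpoch (y/P^j) P k"
    unfolding qpoch_Suc' sh ..
  have q2: "\<And>y. qpoch (-(y/P^(Suc j))) P (Suc k) = (1 + y/P^(Suc j)) * qpoch (-(y/P^j)) P k"
    unfolding qpoch_Suc' using sh by simp
  have q3: "qpoch (inverse (P^(Suc j))) P (Suc k) = (1 - inverse (P^(Suc j))) * qpoch (inverse (P^j)) P k"
  proof -
    have "inverse (P^(Suc j)) * P = inverse (P^j)" using P0 by (simp add: field_simps)
    then show ?thesis by (simp only: qpoch_Suc')
  qed
  have cA: "coefA a b s P n (Suc j) = coefA a b s P n j * ((1 - inverse (b*P^(n+1)) * P^j) * (1 - (- inverse (a*P^(n+1))) * P^j)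
      / ((1 - P*P^j) * (1 - inverse (a*b*P^(2*n+2)) * P^j)) * (-s))"
    unfolding coefA_def qpoch_Suc by (simp add: divide_inverse inverse_mult_distrib mult_ac)
  define \<rho> where "\<rho> = ((1 - inverse (b*P^(n+1)) * P^j) * (1 - (- inverse (a*P^(n+1))) * P^j)
      / ((1 - P*P^j) * (1 - inverse (a*b*P^(2*n+2)) * P^j)) * (-s))
      * ((1 - inverse (P^(Suc j))) * (1 - a*b*P^(2*n+3)/P^(Suc j)) / ((1 - b*P^(n+2)/P^(Suc j)) * (1 + a*P^(n+2)/P^(Suc j))) * s)"
  have X1: "Xf a b s P n (Suc j) (Suc k) = Xf a b s P n j k * \<rho>"
    unfolding Xf_def cA q1 q2 q3 \<rho>_def by (simp add: divide_inverse inverse_mult_distrib mult_ac)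
  have r1: "\<rho> = 1"
  proof -
    define J where "J = P^j"
    define W where "W = P^(n-j)"
    have J0: "J \<noteq> 0" and W0: "W \<noteq> 0" using P0 by (auto simp: J_def W_def)
    have Pn: "P^n = J*W" using assms by (simp add: J_def W_def power_add[symmetric])
    have e1: "P^(n+1) = J*W*P" and e2: "P^(n+2) = J*W*P^2" and e3: "P^(2*n+2) = J^2*W^2*P^2"
      and e4: "P^(2*n+3) = J^2*W^2*P^3" and e5: "P^(Suc j) = J*P"
    proof -
      show "P^(n+1) = J*W*P" by (simp add: Pn mult_ac)
      show "P^(n+2) = J*W*P^2" by (simp add: power_add Pn mult_ac) (simp add: power2_eq_square)
      have "P^(2*n+2) = (P^n)^2*P^2" by (metis power_add power_mult mult.commute)
      then show "P^(2*n+2) = J^2*W^2*P^2" by (simp add: Pn power_mult_distrib)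
      have "P^(2*n+3) = (P^n)^2*P^3" by (metis power_add power_mult mult.commute)
      then show "P^(2*n+3) = J^2*W^2*P^3" by (simp add: Pn power_mult_distrib)
      show "P^(Suc j) = J*P" by (simp add: J_def mult.commute)
    qed
    define u1 where "u1 = 1 - b*W*P"
    define u2 where "u2 = 1 + a*W*P"
    define D where "D = 1 - P*J"
    define E where "E = 1 - a*b*J*W^2*P^2"
    have nu1: "u1 \<noteq> 0" using h3[of "n-j+1"] by (simp add: u1_def W_def mult_ac)
    have nu2: "u2 \<noteq> 0"
    proof
      assume "u2 = 0"
      then have "a*P^(n-j+1) = -1" unfolding u2_def W_def by (simp add: mult_ac add_eq_0_iff)
      then show False using h4 by blast
    qed
    have nD: "D \<noteq> 0" using h1[of "Suc j"] by (simp add: D_def J_def)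
    have nE: "E \<noteq> 0"
    proof -
      have eq: "a*b*J*W^2*P^2 = a*b*P^(j + 2*(n-j) + 2)"
        by (simp add: J_def W_def power_add power_mult[symmetric] mult_ac) (simp add: power2_eq_square)
      show ?thesis unfolding E_def eq using h2[of "j + 2*(n-j) + 2"] by auto
    qed
    have p1: "1 - inverse (b*P^(n+1)) * P^j = -u1/(b*W*P)" unfolding e1 J_def[symmetric] u1_def
      using b0 J0 W0 P0 by (simp add: field_simps)
    have p2: "1 - (- inverse (a*P^(n+1))) * P^j = u2/(a*W*P)" unfolding e1 J_def[symmetric] u2_def
      using a0 J0 W0 P0 by (simp add: field_simps)
    have p3: "1 - inverse (a*b*P^(2*n+2)) * P^j = -E/(a*b*J*W^2*P^2)" unfolding e3 J_def[symmetric] E_def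
      using a0 b0 J0 W0 P0 by (simp add: field_simps power2_eq_square)
    have p4: "1 - inverse (P^(Suc j)) = -D/(J*P)" unfolding e5 D_def using J0 P0 by (simp add: field_simps)
    have p5: "1 - a*b*P^(2*n+3)/P^(Suc j) = E" unfolding e4 e5 E_def using J0 P0
      by (simp add: field_simps power2_eq_square numeral_3_eq_3)
    have p6: "1 - b*P^(n+2)/P^(Suc j) = u1" unfolding e2 e5 u1_def using J0 P0 by (simp add: field_simps power2_eq_square)
    have p7: "1 + a*P^(n+2)/P^(Suc j) = u2" unfolding e2 e5 u2_def using J0 P0 by (simp add: field_simps power2_eq_square)
    have p8: "1 - P*P^j = D" unfolding D_def J_def ..
    have ss: "s* s = P" using Ps by (simp add: power2_eq_square)
    have "\<rho> = (-u1/(b*W*P)) * (u2/(a*W*P)) / (D * (-E/(a*b*J*W^2*P^2))) * (-s) * ((-D/(J*P)) * E / (u1*u2) * s)"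
      unfolding \<rho>_def p1 p2 p3 p4 p5 p6 p7 p8 by simp
    also have "\<dots> = (s* s)/P" using nu1 nu2 nD nE a0 b0 J0 W0 P0 by (simp add: field_simps power2_eq_square)
    finally show ?thesis using ss P0 by simp
  qed
  show ?thesis using X1 r1 by simp
qed

lemma Xf_G: "k + m \<le> n \<Longrightarrow> Xf a b s P n (k+m) k = G a b s P n m"
proof (induction k)
  case 0
  then show ?case using coef_G by (simp add: Xf_def)
next
  case (Suc k)
  then have "Xf a b s P n (Suc k + m) (Suc k) = Xf a b s P n (k+m) k" using Xf_step[of "k+m" n k] by simp
  then show ?case using Suc by simp
qed

lemma termA_Xf: "coefA a b s P n j * termA a b s P n j k = H a b s P k * Xf a b s P n j k"
proof -
  have "P^k = s^k * s^k" unfolding Ps by (simp add: power_mult[symmetric] power_add[symmetric] mult_2[symmetric] mult.commute)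
  then show ?thesis unfolding termA_def H_def Xf_def by (simp add: divide_inverse inverse_mult_distrib mult_ac)
qed

lemma termA_zero: assumes "j < k" shows "termA a b s P n j k = 0"
proof -
  have P0: "P \<noteq> 0" using Ps s0 by simp
  have "qpoch (inverse (P^j)) P k = 0" unfolding qpoch_def
    using assms P0 by (auto simp: prod_zero_iff intro!: bexI[of _ j])
  then show ?thesis by (simp add: termA_def)
qed

lemma coef_phi: assumes "j \<le> n"
  shows "coefA a b s P n j * (\<Sum>k. termA a b s P n j k) = Acoef a b s P n j"
proof -
  have "(\<Sum>k. termA a b s P n j k) = (\<Sum>k\<le>j. termA a b s P n j k)"
    by (rule suminf_finite) (auto simp: termA_zero)
  then have "coefA a b s P n j * (\<Sum>k. termA a b s P n j k) = (\<Sum>k\<le>j. H a b s P k * Xf a b s P n j k)"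
    by (simp add: sum_distrib_left termA_Xf)
  also have "\<dots> = (\<Sum>k\<le>j. H a b s P k * G a b s P n (j-k))"
  proof (rule sum.cong)
    fix k assume "k \<in> {..j}"
    then have "k + (j-k) \<le> n" "k + (j - k) = j" using assms by auto
    then show "H a b s P k * Xf a b s P n j k = H a b s P k * G a b s P n (j-k)" using Xf_G by metis
  qed simp
  also have "\<dots> = (\<Sum>m\<le>j. G a b s P n m * H a b s P (j-m))"
    by (rule sum.reindex_bij_witness[where i="\<lambda>m. j - m" and j="\<lambda>k. j - k"]) (auto simp: mult.commute)
  finally show ?thesis by (simp add: Acoef_def)
qed

end

context fixes p :: real assumes p0: "0 < p"
begin

lemma pw_add: "pw p (x + y) = pw p x * pw p y"
  by (simp add: pw_def powr_add)
lemma pw_diff: "pw p (x - y) = pw p x / pw p y"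
  by (simp add: pw_def powr_diff)
lemma pw_nat: "pw p (real n) = of_real p ^ n"
  using p0 by (simp add: pw_def powr_realpow)
lemma pw_neg: "pw p (- x) = inverse (pw p x)"
  using p0 by (simp add: pw_def powr_minus)
lemma pw_mult_nat: "pw p (real n * x) = pw p x ^ n"
  using p0 by (simp add: pw_def powr_powr[symmetric] powr_realpow mult.commute)
lemma pw_pos: "pw p x = of_real (p powr x)" by (simp add: pw_def)

end

theorem theorem4p1:
  fixes q p \<alpha> \<beta> :: real and n :: nat and \<mu> :: complex
  assumes "0 < q" "q < 1" "p = q powr (1/2)" "\<alpha> > -1" "\<beta> > -1"
  shows "bpoly p \<alpha> \<beta> n \<mu> =
    (\<Sum>j=0..n.
       (qpoch (pw p (-\<beta> - real n - 1)) (of_real p) j * qpoch (- pw p (-\<alpha> - real n - 1)) (of_real p) j)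
       / (qpoch (of_real p) (of_real p) j * qpoch (pw p (- 2 * real n - \<alpha> - \<beta> - 2)) (of_real p) j)
       * (-1) ^ j * pw p (real j / 2) * \<mu> ^ (n - j)
       * phi43 (pw p (- real j)) (pw p (2 * real n + \<alpha> + \<beta> + 3 - real j)) (pw p (\<beta> + 1))
               (- pw p (\<alpha> + 1))
               (pw p (\<alpha> + \<beta> + 2)) (pw p (real n + \<beta> + 2 - real j)) (- pw p (\<alpha> + real n + 2 - real j))
               (of_real p) (of_real p))"
proof -
  have p0: "0 < p" using assms by simp
  have p1: "p < 1"
  proof -
    have "q powr (1/2) < 1 powr (1/2)" by (rule powr_less_mono2) (use assms in auto)
    then show ?thesis using assms by simp
  qed
  define a where "a = pw p \<alpha>"
  define b where "b = pw p \<beta>"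
  define s where "s = pw p (1/2)"
  define P where "P = complex_of_real p"
  have Ps: "P = s^2"
  proof -
    have "pw p (real 2 * (1/2)) = s^2" unfolding s_def by (rule pw_mult_nat[OF p0])
    then show ?thesis using pw_nat[OF p0, of 1] by (simp add: P_def)
  qed
  have s0: "s \<noteq> 0" and a0: "a \<noteq> 0" and b0: "b \<noteq> 0" using p0 by (auto simp: s_def a_def b_def pw_def)
  have P_pw: "P^e = pw p (real e)" for e using pw_nat[OF p0, of e] by (simp add: P_def)
  have lt1: "pw p x \<noteq> 1" if "x > 0" for x
  proof -
    have "p powr x < 1 powr x" by (rule powr_less_mono2) (use p0 p1 that in auto)
    then have "p powr x < 1" by simp
    then show ?thesis by (simp add: pw_def)
  qed
  have h1: "P^e \<noteq> 1" if "e \<ge> 1" for e using lt1[of "real e"] that by (simp add: P_pw)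
  have h2: "a*b*P^e \<noteq> 1" if "e \<ge> 2" for e
  proof -
    have "a*b*P^e = pw p (\<alpha> + \<beta> + real e)" by (simp add: a_def b_def P_pw pw_add[OF p0])
    moreover have "\<alpha> + \<beta> + real e > 0" using assms that by simp
    ultimately show ?thesis using lt1 by simp
  qed
  have h3: "b*P^e \<noteq> 1" if "e \<ge> 1" for e
  proof -
    have "b*P^e = pw p (\<beta> + real e)" by (simp add: b_def P_pw pw_add[OF p0])
    moreover have "\<beta> + real e > 0" using assms that by simp
    ultimately show ?thesis using lt1 by simp
  qed
  have h4: "a*P^e \<noteq> -1" for e
  proof -
    have "a*P^e = complex_of_real (p powr (\<alpha> + real e))" by (simp add: a_def P_pw pw_def powr_add)
    moreover have "p powr (\<alpha> + real e) > 0" using p0 by simp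
    ultimately show ?thesis by (metis of_real_eq_iff of_real_minus of_real_1 neg_0_less_iff_less less_asym zero_less_one)
  qed
  note hyps = Ps s0 a0 b0 h1 h2 h3 h4
  have pwe: "\<And>x y. x = y \<Longrightarrow> pw p x = pw p y" by simp
  have pw1: "pw p (real 1) = P" using P_pw[of 1] by simp
  note pwr = pw_neg[OF p0] pw_add[OF p0] pw_diff[OF p0] pw1
  have c1: "\<And>j k. pw p (-\<beta> - real n - 1) = inverse (b*P^(n+1))"
  proof -
    fix j k :: nat
    have "pw p (-\<beta> - real n - 1) = pw p (-(\<beta> + real (n+1)))" by (rule pwe) (simp add: algebra_simps)
    also have "\<dots> = inverse (b*P^(n+1))" by (simp only: pwr a_def b_def s_def P_pw pw_mult_nat[OF p0])
    finally show "pw p (-\<beta> - real n - 1) = inverse (b*P^(n+1))" .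
  qed
  have c2: "\<And>j k. pw p (-\<alpha> - real n - 1) = inverse (a*P^(n+1))"
  proof -
    fix j k :: nat
    have "pw p (-\<alpha> - real n - 1) = pw p (-(\<alpha> + real (n+1)))" by (rule pwe) (simp add: algebra_simps)
    also have "\<dots> = inverse (a*P^(n+1))" by (simp only: pwr a_def b_def s_def P_pw pw_mult_nat[OF p0])
    finally show "pw p (-\<alpha> - real n - 1) = inverse (a*P^(n+1))" .
  qed
  have c3: "\<And>j k. pw p (- 2 * real n - \<alpha> - \<beta> - 2) = inverse (a*b*P^(2*n+2))"
  proof -
    fix j k :: nat
    have "pw p (- 2 * real n - \<alpha> - \<beta> - 2) = pw p (-(\<alpha> + \<beta> + real (2*n+2)))" by (rule pwe) (simp add: algebra_simps)
    also have "\<dots> = inverse (a*b*P^(2*n+2))" by (simp only: pwr a_def b_def s_def P_pw pw_mult_nat[OF p0])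
    finally show "pw p (- 2 * real n - \<alpha> - \<beta> - 2) = inverse (a*b*P^(2*n+2))" .
  qed
  have c5: "\<And>j. pw p (- real j) = inverse (P^j)" by (simp only: pw_neg[OF p0] P_pw)
  have c6: "\<And>j k. pw p (2 * real n + \<alpha> + \<beta> + 3 - real j) = a*b*P^(2*n+3)/P^j"
  proof -
    fix j k :: nat
    have "pw p (2 * real n + \<alpha> + \<beta> + 3 - real j) = pw p (\<alpha> + \<beta> + real (2*n+3) - real j)" by (rule pwe) (simp add: algebra_simps)
    also have "\<dots> = a*b*P^(2*n+3)/P^j" by (simp only: pwr a_def b_def s_def P_pw pw_mult_nat[OF p0])
    finally show "pw p (2 * real n + \<alpha> + \<beta> + 3 - real j) = a*b*P^(2*n+3)/P^j" .
  qed
  have c7: "\<And>j k. pw p (\<beta> + 1) = b*P"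
  proof -
    fix j k :: nat
    have "pw p (\<beta> + 1) = pw p (\<beta> + real 1)" by (rule pwe) (simp add: algebra_simps)
    also have "\<dots> = b*P" by (simp only: pwr a_def b_def s_def P_pw pw_mult_nat[OF p0])
    finally show "pw p (\<beta> + 1) = b*P" .
  qed
  have c8: "\<And>j k. pw p (\<alpha> + 1) = a*P"
  proof -
    fix j k :: nat
    have "pw p (\<alpha> + 1) = pw p (\<alpha> + real 1)" by (rule pwe) (simp add: algebra_simps)
    also have "\<dots> = a*P" by (simp only: pwr a_def b_def s_def P_pw pw_mult_nat[OF p0])
    finally show "pw p (\<alpha> + 1) = a*P" .
  qed
  have c9: "\<And>j k. pw p (\<alpha> + \<beta> + 2) = a*b*P^2"
  proof -
    fix j k :: nat
    have "pw p (\<alpha> + \<beta> + 2) = pw p (\<alpha> + \<beta> + real 2)" by (rule pwe) (simp add: algebra_simps)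
    also have "\<dots> = a*b*P^2" by (simp only: pwr a_def b_def s_def P_pw pw_mult_nat[OF p0])
    finally show "pw p (\<alpha> + \<beta> + 2) = a*b*P^2" .
  qed
  have c10: "\<And>j k. pw p (real n + \<beta> + 2 - real j) = b*P^(n+2)/P^j"
  proof -
    fix j k :: nat
    have "pw p (real n + \<beta> + 2 - real j) = pw p (\<beta> + real (n+2) - real j)" by (rule pwe) (simp add: algebra_simps)
    also have "\<dots> = b*P^(n+2)/P^j" by (simp only: pwr a_def b_def s_def P_pw pw_mult_nat[OF p0])
    finally show "pw p (real n + \<beta> + 2 - real j) = b*P^(n+2)/P^j" .
  qed
  have c11: "\<And>j k. pw p (\<alpha> + real n + 2 - real j) = a*P^(n+2)/P^j"
  proof -
    fix j k :: nat
    have "pw p (\<alpha> + real n + 2 - real j) = pw p (\<alpha> + real (n+2) - real j)" by (rule pwe) (simp add: algebra_simps)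
    also have "\<dots> = a*P^(n+2)/P^j" by (simp only: pwr a_def b_def s_def P_pw pw_mult_nat[OF p0])
    finally show "pw p (\<alpha> + real n + 2 - real j) = a*P^(n+2)/P^j" .
  qed
  have d1: "pw p (\<beta> - \<alpha>) = b/a" by (simp only: pw_diff[OF p0] a_def b_def)
  have d2: "\<And>j k. pw p (\<alpha> + \<beta> + 3 + 2 * real k) = a*b*P^(2*k+3)"
  proof -
    fix j k :: nat
    have "pw p (\<alpha> + \<beta> + 3 + 2 * real k) = pw p (\<alpha> + \<beta> + real (2*k+3))" by (rule pwe) (simp add: algebra_simps)
    also have "\<dots> = a*b*P^(2*k+3)" by (simp only: pwr a_def b_def s_def P_pw pw_mult_nat[OF p0])
    finally show "pw p (\<alpha> + \<beta> + 3 + 2 * real k) = a*b*P^(2*k+3)" .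
  qed
  have d3: "\<And>j k. pw p (\<alpha> + \<beta> + 2 + 2 * real k) = a*b*P^(2*k+2)"
  proof -
    fix j k :: nat
    have "pw p (\<alpha> + \<beta> + 2 + 2 * real k) = pw p (\<alpha> + \<beta> + real (2*k+2))" by (rule pwe) (simp add: algebra_simps)
    also have "\<dots> = a*b*P^(2*k+2)" by (simp only: pwr a_def b_def s_def P_pw pw_mult_nat[OF p0])
    finally show "pw p (\<alpha> + \<beta> + 2 + 2 * real k) = a*b*P^(2*k+2)" .
  qed
  have d4: "\<And>j k. pw p (\<alpha> + \<beta> + 4 + 2 * real k) = a*b*P^(2*k+4)"
  proof -
    fix j k :: nat
    have "pw p (\<alpha> + \<beta> + 4 + 2 * real k) = pw p (\<alpha> + \<beta> + real (2*k+4))" by (rule pwe) (simp add: algebra_simps)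
    also have "\<dots> = a*b*P^(2*k+4)" by (simp only: pwr a_def b_def s_def P_pw pw_mult_nat[OF p0])
    finally show "pw p (\<alpha> + \<beta> + 4 + 2 * real k) = a*b*P^(2*k+4)" .
  qed
  have d5: "\<And>j k. pw p (\<alpha> + 3/2 + real k) = a* s^3*P^k"
  proof -
    fix j k :: nat
    have "pw p (\<alpha> + 3/2 + real k) = pw p (\<alpha> + real 3 * (1/2) + real k)" by (rule pwe) (simp add: algebra_simps)
    also have "\<dots> = a* s^3*P^k" by (simp only: pwr a_def b_def s_def P_pw pw_mult_nat[OF p0])
    finally show "pw p (\<alpha> + 3/2 + real k) = a* s^3*P^k" .
  qed
  have e1: "\<And>j k. pw p (2 * \<alpha> + 2 + 2 * real k) = a^2*P^(2*k+2)"
  proof -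
    fix j k :: nat
    have "pw p (2 * \<alpha> + 2 + 2 * real k) = pw p (real 2 * \<alpha> + real (2*k+2))" by (rule pwe) (simp add: algebra_simps)
    also have "\<dots> = a^2*P^(2*k+2)" by (simp only: pwr a_def b_def s_def P_pw pw_mult_nat[OF p0])
    finally show "pw p (2 * \<alpha> + 2 + 2 * real k) = a^2*P^(2*k+2)" .
  qed
  have e2: "\<And>j k. pw p (2 * \<beta> + 2 + 2 * real k) = b^2*P^(2*k+2)"
  proof -
    fix j k :: nat
    have "pw p (2 * \<beta> + 2 + 2 * real k) = pw p (real 2 * \<beta> + real (2*k+2))" by (rule pwe) (simp add: algebra_simps)
    also have "\<dots> = b^2*P^(2*k+2)" by (simp only: pwr a_def b_def s_def P_pw pw_mult_nat[OF p0])
    finally show "pw p (2 * \<beta> + 2 + 2 * real k) = b^2*P^(2*k+2)" .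
  qed
  have e3: "\<And>j k. pw p (2 * real k + \<alpha> + \<beta> + 2) = a*b*P^(2*k+2)"
  proof -
    fix j k :: nat
    have "pw p (2 * real k + \<alpha> + \<beta> + 2) = pw p (\<alpha> + \<beta> + real (2*k+2))" by (rule pwe) (simp add: algebra_simps)
    also have "\<dots> = a*b*P^(2*k+2)" by (simp only: pwr a_def b_def s_def P_pw pw_mult_nat[OF p0])
    finally show "pw p (2 * real k + \<alpha> + \<beta> + 2) = a*b*P^(2*k+2)" .
  qed
  have e4: "\<And>j k. pw p (\<alpha> + \<beta> + 1 + 2 * real k) = a*b*P^(2*k+1)"
  proof -
    fix j k :: nat
    have "pw p (\<alpha> + \<beta> + 1 + 2 * real k) = pw p (\<alpha> + \<beta> + real (2*k+1))" by (rule pwe) (simp add: algebra_simps)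
    also have "\<dots> = a*b*P^(2*k+1)" by (simp only: pwr a_def b_def s_def P_pw pw_mult_nat[OF p0])
    finally show "pw p (\<alpha> + \<beta> + 1 + 2 * real k) = a*b*P^(2*k+1)" .
  qed
  have c4: "\<And>j. pw p (real j / 2) = s^j"
  proof -
    fix j :: nat
    have "pw p (real j / 2) = pw p (real j * (1/2))" by (rule pwe) simp
    then show "pw p (real j / 2) = s^j" by (simp only: pw_mult_nat[OF p0] s_def)
  qed
  have bc_eq: "\<And>k. bc p \<alpha> \<beta> k = cc a b s P k" unfolding bc_def cc_def d1 d2 d3 d4 d5 by (simp add: mult_ac)
  have bd_eq: "\<And>k. bd p \<alpha> \<beta> k = dd a b s P k" unfolding bd_def dd_def e1 e2 e3 e4 d2 d3 by (simp add: mult_ac)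
  have S0: "Spoly a b s P 0 \<mu> = 1" by (simp add: Spoly_def Acoef_def G_def H_def)
  have bp: "bpoly p \<alpha> \<beta> m \<mu> = Spoly a b s P m \<mu> \<and> bpoly p \<alpha> \<beta> (Suc m) \<mu> = Spoly a b s P (Suc m) \<mu>" for m
  proof (induction m)
    case 0
    have "Spoly a b s P 1 \<mu> = (\<mu> + cc a b s P 0) * Spoly a b s P 0 \<mu>" using Srec[OF hyps, of 0 \<mu>] by simp
    then show ?case using S0 bc_eq[of 0] by simp
  next
    case (Suc m)
    have "Spoly a b s P (Suc m + 1) \<mu> = (\<mu> + cc a b s P (Suc m)) * Spoly a b s P (Suc m) \<mu> + dd a b s P (Suc m) * Spoly a b s P m \<mu>"
      using Srec[OF hyps, of "Suc m" \<mu>] by simp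
    then show ?case using Suc bc_eq bd_eq by simp
  qed
  have sj: "(qpoch (pw p (-\<beta> - real n - 1)) P j * qpoch (- pw p (-\<alpha> - real n - 1)) P j)
       / (qpoch P P j * qpoch (pw p (- 2 * real n - \<alpha> - \<beta> - 2)) P j)
       * (-1) ^ j * pw p (real j / 2) * \<mu> ^ (n - j)
       * phi43 (pw p (- real j)) (pw p (2 * real n + \<alpha> + \<beta> + 3 - real j)) (pw p (\<beta> + 1))
               (- pw p (\<alpha> + 1))
               (pw p (\<alpha> + \<beta> + 2)) (pw p (real n + \<beta> + 2 - real j)) (- pw p (\<alpha> + real n + 2 - real j))
               P P = Acoef a b s P n j * \<mu>^(n-j)" if jn: "j \<le> n" for j
  proof -
    have ph: "phi43 (inverse (P^j)) (a*b*P^(2*n+3)/P^j) (b*P) (-(a*P)) (a*b*P^2) (b*P^(n+2)/P^j) (-(a*P^(n+2)/P^j)) P P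
       = (\<Sum>k. termA a b s P n j k)" unfolding phi43_def termA_def ..
    have cf: "(qpoch (inverse (b*P^(n+1))) P j * qpoch (- inverse (a*P^(n+1))) P j) / (qpoch P P j * qpoch (inverse (a*b*P^(2*n+2))) P j)
       * (-1)^j * s^j = coefA a b s P n j" unfolding coefA_def ..
    show ?thesis unfolding c1 c2 c3 c4 c5 c6 c7 c8 c9 c10 c11 ph cf
      using coef_phi[OF hyps jn] by (simp add: mult_ac)
  qed
  have "(\<Sum>j=0..n.
       (qpoch (pw p (-\<beta> - real n - 1)) P j * qpoch (- pw p (-\<alpha> - real n - 1)) P j)
       / (qpoch P P j * qpoch (pw p (- 2 * real n - \<alpha> - \<beta> - 2)) P j)
       * (-1) ^ j * pw p (real j / 2) * \<mu> ^ (n - j)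
       * phi43 (pw p (- real j)) (pw p (2 * real n + \<alpha> + \<beta> + 3 - real j)) (pw p (\<beta> + 1))
               (- pw p (\<alpha> + 1))
               (pw p (\<alpha> + \<beta> + 2)) (pw p (real n + \<beta> + 2 - real j)) (- pw p (\<alpha> + real n + 2 - real j))
               P P) = Spoly a b s P n \<mu>"
    unfolding Spoly_def atLeast0AtMost by (rule sum.cong[OF refl], rule sj, simp)
  then show ?thesis using bp[of n] unfolding P_def by simp
qed

end
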